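(* Let $p\geq 0$ and let $G$ be a nearly balanced bipartite graph of order $2n-1$ with $\delta(G)\geq k$. (i) If $k=p+1$, $n\geq 2k+3$, and $\rho(G)\geq \sqrt{(n-1)^2+k}$, then $G$ is $2p$-Hamilton-biconnected. (ii) If $k\geq p+2$, $n\geq \frac{(k+2)(k-p+1)}{2}$, and $\rho(G)\geq \sqrt{n(n-k+p)+k(k-p-1)}$, then $G$ is $2p$-Hamilton-biconnected.
   Context: $\rho(G)$ is the largest eigenvalue of the adjacency matrix. A bipartite graph $G=(X,Y;E)$ is nearly balanced if $|X|=|Y|+1$; it is Hamilton-biconnected if for any two distinct $u,v\in X$ there is a Hamiltonian path with ends $u,v$. A vertex set $W$ is balanced if $|W\cap X|=|W\cap Y|$; $G$ is $2p$-Hamilton-biconnected if for every balanced $W$ with $|W|=2p$, the subgraph induced by $V(G)\setminus W$ is Hamilton-biconnected. *)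

theory Defs
  imports Complex_Main
begin

definition bipartite_graph :: "'a set \<Rightarrow> 'a set \<Rightarrow> 'a set set \<Rightarrow> bool" where
  "bipartite_graph X Y E \<longleftrightarrow> finite X \<and> finite Y \<and> X \<inter> Y = {} \<and>
     (\<forall>e\<in>E. \<exists>x\<in>X. \<exists>y\<in>Y. e = {x, y})"

definition nearly_balanced :: "'a set \<Rightarrow> 'a set \<Rightarrow> bool" where
  "nearly_balanced X Y \<longleftrightarrow> card X = card Y + 1"

definition degree :: "'a set set \<Rightarrow> 'a \<Rightarrow> nat" where
  "degree E v = card {u. {u, v} \<in> E}"

definition min_degree_ge :: "'a set \<Rightarrow> 'a set set \<Rightarrow> nat \<Rightarrow> bool" where
  "min_degree_ge V E k \<longleftrightarrow> (\<forall>v\<in>V. degree E v \<ge> k)"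

definition adj :: "'a set set \<Rightarrow> 'a \<Rightarrow> 'a \<Rightarrow> real" where
  "adj E u v = (if {u, v} \<in> E then 1 else 0)"

definition adj_eigenvalue :: "'a set \<Rightarrow> 'a set set \<Rightarrow> real \<Rightarrow> bool" where
  "adj_eigenvalue V E mu \<longleftrightarrow> (\<exists>x :: 'a \<Rightarrow> real. (\<exists>v\<in>V. x v \<noteq> 0) \<and>
     (\<forall>u\<in>V. (\<Sum>w\<in>V. adj E u w * x w) = mu * x u))"

definition spectral_radius :: "'a set \<Rightarrow> 'a set set \<Rightarrow> real" where
  "spectral_radius V E = Max {mu. adj_eigenvalue V E mu}"

definition induced_edges :: "'a set set \<Rightarrow> 'a set \<Rightarrow> 'a set set" where
  "induced_edges E S = {e \<in> E. e \<subseteq> S}"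

definition ham_path :: "'a set \<Rightarrow> 'a set set \<Rightarrow> 'a \<Rightarrow> 'a \<Rightarrow> bool" where
  "ham_path V E u v \<longleftrightarrow> (\<exists>ps. ps \<noteq> [] \<and> distinct ps \<and> set ps = V \<and>
     hd ps = u \<and> last ps = v \<and>
     (\<forall>i. i + 1 < length ps \<longrightarrow> {ps ! i, ps ! (i + 1)} \<in> E))"

definition ham_biconnected :: "'a set \<Rightarrow> 'a set \<Rightarrow> 'a set set \<Rightarrow> bool" where
  "ham_biconnected X Y E \<longleftrightarrow>
     (\<forall>u\<in>X. \<forall>v\<in>X. u \<noteq> v \<longrightarrow> ham_path (X \<union> Y) E u v)"

definition balanced_set :: "'a set \<Rightarrow> 'a set \<Rightarrow> 'a set \<Rightarrow> bool" where
  "balanced_set X Y W \<longleftrightarrow> card (W \<inter> X) = card (W \<inter> Y)"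

definition ham_biconnected_2p :: "nat \<Rightarrow> 'a set \<Rightarrow> 'a set \<Rightarrow> 'a set set \<Rightarrow> bool" where
  "ham_biconnected_2p p X Y E \<longleftrightarrow>
     (\<forall>W. W \<subseteq> X \<union> Y \<longrightarrow> balanced_set X Y W \<longrightarrow> card W = 2 * p \<longrightarrow>
        ham_biconnected (X - W) (Y - W) (induced_edges E (X \<union> Y - W)))"

end

theory Submission
  imports Defs "HOL-Analysis.Convex"
begin

lemma elim_lemma:
  fixes c :: "'j \<Rightarrow> 'i \<Rightarrow> real"
  assumes "finite J" "finite I" "card J < card I"
  shows "\<exists>x. (\<exists>i\<in>I. x i \<noteq> 0) \<and> (\<forall>j\<in>J. (\<Sum>i\<in>I. c j i * x i) = 0)"
  using assms
proof (induction J arbitrary: I c rule: finite_induct)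
  case empty
  then obtain i where "i \<in> I" by (metis card.empty card_gt_0_iff ex_in_conv)
  then show ?case by (intro exI[of _ "\<lambda>_. 1"]) auto
next
  case (insert j0 J I c)
  show ?case
  proof (cases "\<forall>i\<in>I. c j0 i = 0")
    case True
    from insert.IH[of I c] insert.prems insert.hyps obtain x where
      x: "\<exists>i\<in>I. x i \<noteq> 0" "\<forall>j\<in>J. (\<Sum>i\<in>I. c j i * x i) = 0" by auto
    show ?thesis using x True by (intro exI[of _ x]) auto
  next
    case False
    then obtain i0 where i0: "i0 \<in> I" "c j0 i0 \<noteq> 0" by auto
    define c' where "c' = (\<lambda>j i. c j i - c j i0 / c j0 i0 * c j0 i)"
    have "card J < card (I - {i0})" using insert.prems insert.hyps i0 by auto
    from insert.IH[OF _ this, of c'] insert.prems obtain y where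
      y: "\<exists>i\<in>I-{i0}. y i \<noteq> 0" "\<forall>j\<in>J. (\<Sum>i\<in>I-{i0}. c' j i * y i) = 0" by auto
    define x where "x = y(i0 := - (\<Sum>i\<in>I-{i0}. c j0 i * y i) / c j0 i0)"
    have sx: "(\<Sum>i\<in>I. c j i * x i) = c j i0 * x i0 + (\<Sum>i\<in>I-{i0}. c j i * y i)" for j
      using insert.prems i0 by (simp add: sum.remove[of I i0] x_def)
    have e0: "(\<Sum>i\<in>I. c j0 i * x i) = 0" using i0 by (simp add: sx) (simp add: x_def)
    have "(\<Sum>i\<in>I. c j i * x i) = 0" if "j \<in> J" for j
    proof -
      have "(\<Sum>i\<in>I-{i0}. c j i * y i) = (\<Sum>i\<in>I-{i0}. c' j i * y i) + c j i0 / c j0 i0 * (\<Sum>i\<in>I-{i0}. c j0 i * y i)"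
        by (simp add: c'_def algebra_simps sum_distrib_left sum_subtractf)
      also have "\<dots> = c j i0 / c j0 i0 * (\<Sum>i\<in>I-{i0}. c j0 i * y i)" using y that by simp
      finally have "(\<Sum>i\<in>I-{i0}. c j i * y i) = c j i0 / c j0 i0 * (\<Sum>i\<in>I-{i0}. c j0 i * y i)" .
      then show ?thesis unfolding sx[of j] using i0 by (simp add: x_def field_simps)
    qed
    moreover have "\<exists>i\<in>I. x i \<noteq> 0" using y by (auto simp: x_def)
    ultimately show ?thesis using e0 by auto
  qed
qed

lemma adj_sym: "adj E u w = adj E w u"
  by (simp add: adj_def insert_commute)

lemma eig_orth:
  assumes "finite V"
    and x: "\<forall>u\<in>V. (\<Sum>w\<in>V. adj E u w * x w) = mu * x u"
    and y: "\<forall>u\<in>V. (\<Sum>w\<in>V. adj E u w * y w) = nu * y u"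
    and "mu \<noteq> nu"
  shows "(\<Sum>v\<in>V. x v * y v) = 0"
proof -
  have "mu * (\<Sum>v\<in>V. x v * y v) = (\<Sum>u\<in>V. (\<Sum>w\<in>V. adj E u w * x w) * y u)"
    using x by (simp add: sum_distrib_left mult.assoc)
  also have "\<dots> = (\<Sum>u\<in>V. \<Sum>w\<in>V. adj E u w * x w * y u)"
    by (simp add: sum_distrib_right)
  also have "\<dots> = (\<Sum>w\<in>V. \<Sum>u\<in>V. adj E u w * x w * y u)"
    by (rule sum.swap)
  also have "\<dots> = (\<Sum>w\<in>V. x w * (\<Sum>u\<in>V. adj E w u * y u))"
    by (simp add: sum_distrib_left mult.commute mult.left_commute, subst adj_sym, simp)
  also have "\<dots> = nu * (\<Sum>v\<in>V. x v * y v)"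
    using y by (simp add: sum_distrib_left mult.commute mult.left_commute)
  finally show ?thesis using assms(4) by (metis mult_right_cancel mult.commute)
qed

lemma eig_finite:
  assumes "finite V"
  shows "finite {mu. adj_eigenvalue V E mu}"
proof (rule ccontr)
  let ?S = "{mu. adj_eigenvalue V E mu}"
  assume "infinite ?S"
  then obtain T where T: "T \<subseteq> ?S" "finite T" "card T = card V + 1"
    using infinite_arbitrarily_large by blast
  define xv where "xv = (\<lambda>mu. SOME x :: 'a \<Rightarrow> real. (\<exists>v\<in>V. x v \<noteq> 0) \<and>
     (\<forall>u\<in>V. (\<Sum>w\<in>V. adj E u w * x w) = mu * x u))"
  have xv: "(\<exists>v\<in>V. xv mu v \<noteq> 0) \<and> (\<forall>u\<in>V. (\<Sum>w\<in>V. adj E u w * xv mu w) = mu * xv mu u)"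
    if "mu \<in> T" for mu
  proof -
    from that T(1) have "adj_eigenvalue V E mu" by auto
    then show ?thesis unfolding adj_eigenvalue_def xv_def by (rule someI_ex)
  qed
  have "card V < card T" using T by simp
  from elim_lemma[OF assms T(2) this, of "\<lambda>v mu. xv mu v"] obtain c where
    c: "\<exists>mu\<in>T. c mu \<noteq> 0" "\<forall>v\<in>V. (\<Sum>mu\<in>T. xv mu v * c mu) = 0" by auto
  then obtain mu0 where mu0: "mu0 \<in> T" "c mu0 \<noteq> 0" by auto
  have N0: "(\<Sum>v\<in>V. xv mu0 v * xv mu0 v) > 0"
  proof -
    from xv[OF mu0(1)] obtain v where "v \<in> V" "xv mu0 v \<noteq> 0" by auto
    then have "0 < (\<Sum>v\<in>{v}. xv mu0 v * xv mu0 v)" by (auto simp: zero_less_mult_iff linorder_neq_iff)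
    also have "\<dots> \<le> (\<Sum>v\<in>V. xv mu0 v * xv mu0 v)"
      using \<open>v \<in> V\<close> assms by (intro sum_mono2) auto
    finally show ?thesis .
  qed
  have "0 = (\<Sum>v\<in>V. xv mu0 v * (\<Sum>mu\<in>T. xv mu v * c mu))" using c by simp
  also have "\<dots> = (\<Sum>mu\<in>T. c mu * (\<Sum>v\<in>V. xv mu0 v * xv mu v))"
    by (simp add: sum_distrib_left sum.swap[of _ V] mult.commute mult.left_commute)
  also have "\<dots> = c mu0 * (\<Sum>v\<in>V. xv mu0 v * xv mu0 v) + (\<Sum>mu\<in>T-{mu0}. c mu * (\<Sum>v\<in>V. xv mu0 v * xv mu v))"
    using mu0 T(2) by (simp add: sum.remove)
  also have "(\<Sum>mu\<in>T-{mu0}. c mu * (\<Sum>v\<in>V. xv mu0 v * xv mu v)) = 0"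
  proof (rule sum.neutral, rule ballI)
    fix mu assume "mu \<in> T - {mu0}"
    then have "(\<Sum>v\<in>V. xv mu0 v * xv mu v) = 0"
      using eig_orth[OF assms, of E "xv mu0" mu0 "xv mu" mu] xv mu0 by auto
    then show "c mu * (\<Sum>v\<in>V. xv mu0 v * xv mu v) = 0" by simp
  qed
  finally show False using mu0 N0 by simp
qed

lemma bip_same_side:
  assumes "bipartite_graph X Y E"
  shows "u \<in> X \<Longrightarrow> w \<in> X \<Longrightarrow> {u, w} \<notin> E" and "u \<in> Y \<Longrightarrow> w \<in> Y \<Longrightarrow> {u, w} \<notin> E"
  using assms unfolding bipartite_graph_def by (metis disjoint_iff doubleton_eq_iff)+

lemma zero_eig:
  assumes G: "bipartite_graph X Y E" and c: "card Y < card X"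
  shows "adj_eigenvalue (X \<union> Y) E 0"
proof -
  have fin: "finite X" "finite Y" "X \<inter> Y = {}" using G unfolding bipartite_graph_def by auto
  from elim_lemma[OF fin(2) fin(1) c, of "adj E"] obtain x where
    x: "\<exists>i\<in>X. x i \<noteq> 0" "\<forall>j\<in>Y. (\<Sum>i\<in>X. adj E j i * x i) = 0" by auto
  define z where "z = (\<lambda>w. if w \<in> X then x w else 0)"
  have "(\<Sum>w\<in>X \<union> Y. adj E u w * z w) = 0" if "u \<in> X \<union> Y" for u
  proof -
    have "(\<Sum>w\<in>X \<union> Y. adj E u w * z w) = (\<Sum>w\<in>X. adj E u w * z w) + (\<Sum>w\<in>Y. adj E u w * z w)"
      using fin by (simp add: sum.union_disjoint)
    also have "(\<Sum>w\<in>Y. adj E u w * z w) = 0" using fin by (auto simp: z_def intro!: sum.neutral)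
    also have "(\<Sum>w\<in>X. adj E u w * z w) = (\<Sum>w\<in>X. adj E u w * x w)" by (simp add: z_def)
    also have "\<dots> = 0"
    proof (cases "u \<in> X")
      case True
      then show ?thesis using bip_same_side(1)[OF G True] by (auto simp: adj_def intro!: sum.neutral)
    next
      case False
      then show ?thesis using x that by auto
    qed
    finally show ?thesis by simp
  qed
  moreover have "\<exists>v\<in>X \<union> Y. z v \<noteq> 0" using x by (auto simp: z_def)
  ultimately show ?thesis unfolding adj_eigenvalue_def by (intro exI[of _ z]) auto
qed

lemma wcs:
  fixes a x :: "'a \<Rightarrow> real"
  assumes a01: "\<forall>w. a w = 0 \<or> a w = 1"
  shows "(\<Sum>w\<in>Q. a w * x w)^2 \<le> (\<Sum>w\<in>Q. a w) * (\<Sum>w\<in>Q. a w * (x w)^2)"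
proof -
  have aa: "a w * a w = a w" for w using a01 by (metis mult_1 mult_zero_left)
  have "(\<Sum>w\<in>Q. a w * x w) = (\<Sum>w\<in>Q. a w * (a w * x w))"
    by (simp add: mult.assoc[symmetric] aa)
  also have "(\<dots>)^2 \<le> (\<Sum>w\<in>Q. (a w)^2) * (\<Sum>w\<in>Q. (a w * x w)^2)"
    by (rule Cauchy_Schwarz_ineq_sum)
  also have "(\<Sum>w\<in>Q. (a w)^2) = (\<Sum>w\<in>Q. a w)"
    by (simp add: power2_eq_square aa)
  also have "(\<Sum>w\<in>Q. (a w * x w)^2) = (\<Sum>w\<in>Q. a w * (x w)^2)"
    by (intro sum.cong refl) (metis aa mult.assoc mult.commute power2_eq_square)
  finally show ?thesis .
qed

lemma side:
  fixes a :: "'a \<Rightarrow> 'a \<Rightarrow> real" and x :: "'a \<Rightarrow> real"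
  assumes fin: "finite P" "finite Q"
    and a01: "\<forall>u w. a u w = 0 \<or> a u w = 1"
    and eq: "\<forall>u\<in>P. mu * x u = (\<Sum>w\<in>Q. a u w * x w)"
  shows "mu^2 * (\<Sum>u\<in>P. (x u)^2) \<le> (\<Sum>w\<in>Q. (x w)^2) * (\<Sum>u\<in>P. \<Sum>w\<in>Q. a u w)"
    and "mu^2 * (\<Sum>u\<in>P. (x u)^2) = (\<Sum>w\<in>Q. (x w)^2) * (\<Sum>u\<in>P. \<Sum>w\<in>Q. a u w) \<Longrightarrow>
         (\<Sum>w\<in>Q. (x w)^2) > 0 \<Longrightarrow> \<forall>u\<in>P. (\<Sum>w\<in>Q. a u w) \<ge> 1 \<Longrightarrow>
         \<forall>u\<in>P. x u \<noteq> 0 \<and> (\<forall>w\<in>Q. a u w = 0 \<longrightarrow> x w = 0)"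
proof -
  let ?SQ = "\<Sum>w\<in>Q. (x w)^2"
  define d where "d u = (\<Sum>w\<in>Q. a u w)" for u
  define c where "c u = (\<Sum>w\<in>Q. a u w * (x w)^2)" for u
  have a0: "a u w \<ge> 0" for u w using a01 by (metis order_refl zero_le_one)
  have d0: "d u \<ge> 0" for u unfolding d_def using a0 by (simp add: sum_nonneg)
  have cle: "c u \<le> ?SQ" for u unfolding c_def
    using a01 by (intro sum_mono) (metis mult_1 mult_zero_left order_refl zero_le_power2)
  have pt1: "mu^2 * (x u)^2 \<le> d u * c u" if "u \<in> P" for u
  proof -
    have "mu^2 * (x u)^2 = (\<Sum>w\<in>Q. a u w * x w)^2" using eq that by (simp flip: power_mult_distrib)
    also have "\<dots> \<le> d u * c u" unfolding d_def c_def using wcs[of "a u"] a01 by blast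
    finally show ?thesis .
  qed
  have pt: "mu^2 * (x u)^2 \<le> d u * ?SQ" if "u \<in> P" for u
    using pt1[OF that] mult_left_mono[OF cle d0] by (rule order_trans)
  have "mu^2 * (\<Sum>u\<in>P. (x u)^2) = (\<Sum>u\<in>P. mu^2 * (x u)^2)" by (simp add: sum_distrib_left)
  also have "\<dots> \<le> (\<Sum>u\<in>P. d u * ?SQ)" using pt by (rule sum_mono)
  also have "\<dots> = ?SQ * (\<Sum>u\<in>P. d u)" by (simp add: sum_distrib_right[symmetric])
  finally show "mu^2 * (\<Sum>u\<in>P. (x u)^2) \<le> ?SQ * (\<Sum>u\<in>P. \<Sum>w\<in>Q. a u w)" unfolding d_def .
  assume E: "mu^2 * (\<Sum>u\<in>P. (x u)^2) = ?SQ * (\<Sum>u\<in>P. \<Sum>w\<in>Q. a u w)"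
    and S: "?SQ > 0" and D: "\<forall>u\<in>P. (\<Sum>w\<in>Q. a u w) \<ge> 1"
  have "(\<Sum>u\<in>P. d u * ?SQ - mu^2 * (x u)^2) = ?SQ * (\<Sum>u\<in>P. d u) - mu^2 * (\<Sum>u\<in>P. (x u)^2)"
  proof -
    have "(\<Sum>u\<in>P. d u * ?SQ) = ?SQ * (\<Sum>u\<in>P. d u)" by (simp add: sum_distrib_right[symmetric])
    moreover have "(\<Sum>u\<in>P. mu^2 * (x u)^2) = mu^2 * (\<Sum>u\<in>P. (x u)^2)" by (simp add: sum_distrib_left)
    ultimately show ?thesis by (simp only: sum_subtractf)
  qed
  also have "\<dots> = 0" using E by (simp add: d_def)
  finally have "\<forall>u\<in>P. d u * ?SQ - mu^2 * (x u)^2 = 0"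
    using sum_nonneg_eq_0_iff[OF fin(1), of "\<lambda>u. d u * ?SQ - mu^2 * (x u)^2"] pt by auto
  then have eqp: "mu^2 * (x u)^2 = d u * ?SQ" if "u \<in> P" for u using that by auto
  show "\<forall>u\<in>P. x u \<noteq> 0 \<and> (\<forall>w\<in>Q. a u w = 0 \<longrightarrow> x w = 0)"
  proof
    fix u assume u: "u \<in> P"
    have du: "d u \<ge> 1" using D u by (simp add: d_def)
    have pos: "d u * ?SQ > 0" using du S by simp
    then have "x u \<noteq> 0" using eqp[OF u] by auto
    moreover have "c u = ?SQ"
    proof -
      have "d u * ?SQ \<le> d u * c u" using eqp[OF u] pt1[OF u] by simp
      then have "?SQ \<le> c u" using du by simp
      then show ?thesis using cle[of u] by simp
    qed
    then have "(\<Sum>w\<in>Q. (1 - a u w) * (x w)^2) = 0"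
      unfolding c_def by (simp add: algebra_simps sum_subtractf)
    then have "\<forall>w\<in>Q. (1 - a u w) * (x w)^2 = 0"
    proof -
      have "(1 - a u w) * (x w)^2 \<ge> 0" for w
        using a01[rule_format, of u w] by auto
      then show ?thesis using sum_nonneg_eq_0_iff[OF fin(2), of "\<lambda>w. (1 - a u w) * (x w)^2"] \<open>(\<Sum>w\<in>Q. (1 - a u w) * (x w)^2) = 0\<close>
        by blast
    qed
    then have "\<forall>w\<in>Q. a u w = 0 \<longrightarrow> x w = 0" by auto
    ultimately show "x u \<noteq> 0 \<and> (\<forall>w\<in>Q. a u w = 0 \<longrightarrow> x w = 0)" by blast
  qed
qed

lemma adj01: "\<forall>u w. adj E u w = 0 \<or> adj E u w = 1" by (simp add: adj_def)

lemma spec: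
  assumes G: "bipartite_graph X Y E" and ev: "adj_eigenvalue (X \<union> Y) E mu"
  shows "mu^2 \<le> (\<Sum>u\<in>X. \<Sum>w\<in>Y. adj E u w) \<and>
    (mu^2 = (\<Sum>u\<in>X. \<Sum>w\<in>Y. adj E u w) \<longrightarrow> (\<forall>u\<in>X. (\<Sum>w\<in>Y. adj E u w) \<ge> 1) \<longrightarrow>
     (\<forall>w\<in>Y. (\<Sum>u\<in>X. adj E w u) \<ge> 1) \<longrightarrow> (\<forall>u\<in>X. \<forall>w\<in>Y. {u, w} \<in> E))"
proof -
  have fin: "finite X" "finite Y" "X \<inter> Y = {}" using G unfolding bipartite_graph_def by auto
  from ev obtain x where x0: "\<exists>v\<in>X \<union> Y. x v \<noteq> 0"
    and xe: "\<forall>u\<in>X \<union> Y. (\<Sum>w\<in>X \<union> Y. adj E u w * x w) = mu * x u"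
    unfolding adj_eigenvalue_def by auto
  let ?e = "\<Sum>u\<in>X. \<Sum>w\<in>Y. adj E u w"
  have split: "(\<Sum>w\<in>X \<union> Y. adj E u w * x w) = (\<Sum>w\<in>X. adj E u w * x w) + (\<Sum>w\<in>Y. adj E u w * x w)" for u
    using fin by (simp add: sum.union_disjoint)
  have eqX: "\<forall>u\<in>X. mu * x u = (\<Sum>w\<in>Y. adj E u w * x w)"
  proof
    fix u assume u: "u \<in> X"
    have "(\<Sum>w\<in>X. adj E u w * x w) = 0"
      using bip_same_side(1)[OF G u] by (auto simp: adj_def intro!: sum.neutral)
    then show "mu * x u = (\<Sum>w\<in>Y. adj E u w * x w)" using xe u split[of u] by auto
  qed
  have eqY: "\<forall>u\<in>Y. mu * x u = (\<Sum>w\<in>X. adj E u w * x w)"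
  proof
    fix u assume u: "u \<in> Y"
    have "(\<Sum>w\<in>Y. adj E u w * x w) = 0"
      using bip_same_side(2)[OF G u] by (auto simp: adj_def intro!: sum.neutral)
    then show "mu * x u = (\<Sum>w\<in>X. adj E u w * x w)" using xe u split[of u] by auto
  qed
  have e': "(\<Sum>w\<in>Y. \<Sum>u\<in>X. adj E w u) = ?e"
    by (subst sum.swap) (simp add: adj_sym)
  let ?SX = "\<Sum>u\<in>X. (x u)^2" and ?SY = "\<Sum>u\<in>Y. (x u)^2"
  have sX: "mu^2 * ?SX \<le> ?SY * ?e" using side(1)[OF fin(1,2) adj01 eqX] .
  have sY: "mu^2 * ?SY \<le> ?SX * ?e" using side(1)[OF fin(2,1) adj01 eqY] e' by simp
  have e0: "?e \<ge> 0" by (intro sum_nonneg) (simp add: adj_def)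
  show ?thesis
  proof (cases "mu = 0")
    case True
    show ?thesis
    proof (intro conjI impI)
      show "mu^2 \<le> ?e" using True e0 by simp
      assume "mu^2 = ?e" and D: "\<forall>u\<in>X. (\<Sum>w\<in>Y. adj E u w) \<ge> 1"
      then have "?e = 0" using True by simp
      moreover have "?e \<ge> (\<Sum>u\<in>X. 1)" using D by (intro sum_mono) auto
      ultimately have "X = {}" using fin by (simp add: card_eq_0_iff)
      then show "\<forall>u\<in>X. \<forall>w\<in>Y. {u, w} \<in> E" by simp
    qed
  next
    case False
    have "mu * ?SX = (\<Sum>u\<in>X. x u * (mu * x u))" by (simp add: sum_distrib_left power2_eq_square mult.commute mult.left_commute)
    also have "\<dots> = (\<Sum>u\<in>X. \<Sum>w\<in>Y. x u * adj E u w * x w)"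
      using eqX by (simp add: sum_distrib_left mult.assoc)
    also have "\<dots> = (\<Sum>w\<in>Y. \<Sum>u\<in>X. x w * adj E w u * x u)"
      by (subst sum.swap) (simp add: adj_sym mult.commute mult.left_commute)
    also have "\<dots> = (\<Sum>w\<in>Y. x w * (mu * x w))"
      using eqY by (simp add: sum_distrib_left mult.assoc)
    also have "\<dots> = mu * ?SY" by (simp add: sum_distrib_left power2_eq_square mult.commute mult.left_commute)
    finally have SS: "?SX = ?SY" using False by simp
    have Spos: "?SY > 0"
    proof (rule ccontr)
      assume "\<not> ?SY > 0"
      then have "?SY = 0" "?SX = 0" using SS by (simp_all add: sum_nonneg leD order.antisym)
      then have "\<forall>u\<in>Y. (x u)^2 = 0" "\<forall>u\<in>X. (x u)^2 = 0"
        using sum_nonneg_eq_0_iff[OF fin(2), of "\<lambda>u. (x u)^2"] sum_nonneg_eq_0_iff[OF fin(1), of "\<lambda>u. (x u)^2"]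
        by auto
      then show False using x0 by auto
    qed
    show ?thesis
    proof (intro conjI impI)
      show "mu^2 \<le> ?e" using sX SS Spos by (simp add: mult.commute)
      assume M: "mu^2 = ?e" and D1: "\<forall>u\<in>X. (\<Sum>w\<in>Y. adj E u w) \<ge> 1" and D2: "\<forall>w\<in>Y. (\<Sum>u\<in>X. adj E w u) \<ge> 1"
      have R1: "\<forall>u\<in>X. x u \<noteq> 0 \<and> (\<forall>w\<in>Y. adj E u w = 0 \<longrightarrow> x w = 0)"
        using side(2)[OF fin(1,2) adj01 eqX] M SS Spos D1 by (simp add: mult.commute)
      have R2: "\<forall>u\<in>Y. x u \<noteq> 0 \<and> (\<forall>w\<in>X. adj E u w = 0 \<longrightarrow> x w = 0)"
        using side(2)[OF fin(2,1) adj01 eqY] M SS Spos D2 e' by (simp add: mult.commute)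
      show "\<forall>u\<in>X. \<forall>w\<in>Y. {u, w} \<in> E"
      proof (intro ballI)
        fix u w assume "u \<in> X" "w \<in> Y"
        then show "{u, w} \<in> E" using R1 R2 by (auto simp: adj_def split: if_splits)
      qed
    qed
  qed
qed

lemma two_opt:
  assumes dist: "distinct ps" and st: "s + 1 < t" "t + 1 < length ps"
    and edges: "\<forall>m. m + 1 < length ps \<and> m \<noteq> s \<and> m \<noteq> t \<longrightarrow> {ps!m, ps!(m+1)} \<in> F"
    and e1: "{ps!s, ps!t} \<in> F" and e2: "{ps!(s+1), ps!(t+1)} \<in> F"
  shows "\<exists>qs. qs \<noteq> [] \<and> distinct qs \<and> set qs = set ps \<and> hd qs = hd ps \<and> last qs = last ps \<and>
     (\<forall>m. m + 1 < length qs \<longrightarrow> {qs!m, qs!(m+1)} \<in> F)"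
proof -
  let ?n = "length ps"
  define \<sigma> where "\<sigma> m = (if s < m \<and> m \<le> t then s + t + 1 - m else m)" for m
  have r1: "s < m \<and> m \<le> t \<Longrightarrow> \<sigma> m = s + t + 1 - m \<and> s < \<sigma> m \<and> \<sigma> m \<le> t" for m
    unfolding \<sigma>_def by simp arith
  have r2: "\<not> (s < m \<and> m \<le> t) \<Longrightarrow> \<sigma> m = m" for m
    unfolding \<sigma>_def by presburger
  define qs where "qs = map (\<lambda>m. ps ! \<sigma> m) [0..<?n]"
  have len: "length qs = ?n" by (simp add: qs_def)
  have qn: "qs ! m = ps ! \<sigma> m" if "m < ?n" for m using that by (simp add: qs_def)
  have sig_range: "\<sigma> m < ?n" if "m < ?n" for m
    using that st r1[of m] r2[of m] by (cases "s < m \<and> m \<le> t") linarith+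
  have sig_inj: "inj_on \<sigma> {..<?n}"
  proof (rule inj_onI)
    fix a b assume ab: "\<sigma> a = \<sigma> b"
    show "a = b"
    proof (cases "s < a \<and> a \<le> t")
      case True note A = r1[OF True]
      show ?thesis
      proof (cases "s < b \<and> b \<le> t")
        case True note B = r1[OF True]
        show ?thesis using A B ab \<open>s < a \<and> a \<le> t\<close> True by linarith
      next
        case False note B = r2[OF False]
        show ?thesis using A B ab False by linarith
      qed
    next
      case False note A = r2[OF False]
      show ?thesis
      proof (cases "s < b \<and> b \<le> t")
        case True note B = r1[OF True]
        show ?thesis using A B ab \<open>\<not> (s < a \<and> a \<le> t)\<close> by linarith
      next
        case False note B = r2[OF False]
        show ?thesis using A B ab by linarith
      qed
    qed
  qed
  have sig_img: "\<sigma> ` {..<?n} = {..<?n}"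
    using sig_inj sig_range by (intro endo_inj_surj) auto
  have nth_inj: "inj_on (nth ps) {..<?n}" using dist by (simp add: inj_on_nth)
  have "qs \<noteq> []" using st len by auto
  have "ps \<noteq> []" using st by auto
  have "distinct qs" unfolding qs_def distinct_map
  proof
    show "inj_on (\<lambda>m. ps ! \<sigma> m) (set [0..<?n])"
      using comp_inj_on[OF sig_inj, of "nth ps"] nth_inj sig_img
      by (simp add: comp_def atLeast0LessThan)
  qed simp
  moreover note \<open>qs \<noteq> []\<close>
  moreover have "set qs = set ps"
  proof -
    have "set qs = (\<lambda>m. ps ! \<sigma> m) ` {..<?n}" by (simp add: qs_def atLeast0LessThan)
    also have "\<dots> = nth ps ` (\<sigma> ` {..<?n})" by (simp add: image_image)
    also have "\<dots> = set ps" unfolding sig_img by (simp add: lessThan_atLeast0 nth_image)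
    finally show ?thesis .
  qed
  moreover have "hd qs = hd ps"
  proof -
    have "\<sigma> 0 = 0" using r2[of 0] by auto
    then show ?thesis using len qn[of 0] \<open>qs \<noteq> []\<close> \<open>ps \<noteq> []\<close> by (simp add: hd_conv_nth)
  qed
  moreover have "last qs = last ps"
  proof -
    have "\<not> (s < ?n - 1 \<and> ?n - 1 \<le> t)" using st by linarith
    then have "\<sigma> (?n - 1) = ?n - 1" using r2 by blast
    then show ?thesis using st len qn[of "?n - 1"]
      \<open>qs \<noteq> []\<close> \<open>ps \<noteq> []\<close> by (simp add: last_conv_nth)
  qed
  moreover have "\<forall>m. m + 1 < length qs \<longrightarrow> {qs!m, qs!(m+1)} \<in> F"
  proof (intro allI impI)
    fix m assume m: "m + 1 < length qs"
    then have q: "qs!m = ps!\<sigma> m" "qs!(m+1) = ps!\<sigma>(m+1)" using len qn by auto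
    consider "m < s" | "m = s" | "s < m \<and> m < t" | "m = t" | "t < m" by linarith
    then show "{qs!m, qs!(m+1)} \<in> F"
    proof cases
      case 1 then have "\<sigma> m = m" "\<sigma> (m+1) = m+1" using r2 by auto
      moreover have "{ps!m, ps!(m+1)} \<in> F" using 1 m len st by (intro edges[rule_format]) auto
      ultimately show ?thesis using q by simp
    next
      case 2 then have "\<sigma> m = s" "\<sigma> (m+1) = t" using r1[of "m+1"] r2[of m] st by auto
      then show ?thesis using q e1 by simp
    next
      case 3
      then have "\<sigma> m = s + t + 1 - m" "\<sigma> (m+1) = s + t - m" using r1[of m] r1[of "m+1"] by auto
      moreover have "{ps!(s+t-m), ps!(s+t-m+1)} \<in> F"
        using edges 3 st by (intro edges[rule_format]) auto
      moreover have "s + t - m + 1 = s + t + 1 - m" using 3 by auto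
      ultimately show ?thesis using q by (simp add: insert_commute)
    next
      case 4 then have "\<sigma> m = s + 1" "\<sigma> (m+1) = t + 1" using r1[of m] r2[of "m+1"] st by auto
      then show ?thesis using q e2 by simp
    next
      case 5 then have "\<sigma> m = m" "\<sigma> (m+1) = m+1" using r2 by auto
      moreover have "{ps!m, ps!(m+1)} \<in> F" using 5 m len st by (intro edges[rule_format]) auto
      ultimately show ?thesis using q by simp
    qed
  qed
  ultimately show ?thesis by blast
qed

definition bipE :: "'a set \<Rightarrow> 'a set \<Rightarrow> 'a set set \<Rightarrow> bool" where
  "bipE A B F \<longleftrightarrow> (\<forall>e\<in>F. \<exists>x\<in>A. \<exists>y\<in>B. e = {x, y})"

definition dg :: "'a set set \<Rightarrow> 'a set \<Rightarrow> 'a \<Rightarrow> nat" where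
  "dg F S v = card {w\<in>S. {v, w} \<in> F}"

lemma bipE_edge:
  assumes "bipE A B F" "A \<inter> B = {}" "{a, w} \<in> F" "a \<in> A"
  shows "w \<in> B"
  using assms unfolding bipE_def by (metis disjoint_iff doubleton_eq_iff)

lemma bipE_edge':
  assumes "bipE A B F" "A \<inter> B = {}" "{w, a} \<in> F" "a \<in> A"
  shows "w \<in> B"
  using bipE_edge[OF assms(1,2) _ assms(4), of w] assms(3) by (simp add: insert_commute)

lemma bipE_edgeB:
  assumes "bipE A B F" "A \<inter> B = {}" "{b, w} \<in> F" "b \<in> B"
  shows "w \<in> A"
  using assms unfolding bipE_def by (metis disjoint_iff doubleton_eq_iff)

lemma core:
  assumes fin: "finite A" "finite B" and disj: "A \<inter> B = {}" and cA: "card A = card B + 1"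
    and bip: "bipE A B F" and x: "x \<in> A" and y: "y \<in> B" and nxy: "{x, y} \<notin> F"
    and deg: "dg F B x + dg F A y \<ge> card A + 1"
    and dist: "distinct ps" and sps: "set ps = A \<union> B" and hdA: "hd ps \<in> A" and lastA: "last ps \<in> A"
    and i: "i + 1 < length ps" "ps ! i = x" "ps ! (i+1) = y"
    and edges: "\<forall>m. m + 1 < length ps \<longrightarrow> {ps!m, ps!(m+1)} \<in> insert {x, y} F"
  shows "\<exists>qs. qs \<noteq> [] \<and> distinct qs \<and> set qs = set ps \<and> hd qs = hd ps \<and> last qs = last ps \<and>
     (\<forall>m. m + 1 < length qs \<longrightarrow> {qs!m, qs!(m+1)} \<in> F)"
proof -
  let ?n = "length ps"
  let ?F' = "insert {x, y} F"
  have bip': "bipE A B ?F'" using bip x y unfolding bipE_def by auto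
  have ne: "ps \<noteq> []" using i by auto
  have nei: "a = b" if "a < ?n" "b < ?n" "ps!a = ps!b" for a b
    using that dist by (simp add: nth_eq_iff_index_eq)
  have other: "{ps!m, ps!(m+1)} \<in> F" if "m + 1 < ?n" "m \<noteq> i" for m
  proof (rule ccontr)
    assume "{ps!m, ps!(m+1)} \<notin> F"
    then have "{ps!m, ps!(m+1)} = {x, y}" using edges that by auto
    then have "(ps!m = x \<and> ps!(m+1) = y) \<or> (ps!m = y \<and> ps!(m+1) = x)" by (auto simp: doubleton_eq_iff)
    then show False
    proof
      assume "ps!m = x \<and> ps!(m+1) = y"
      then have "ps!m = ps!i" using i by simp
      then have "m = i" using nei[of m i] that i by linarith
      then show False using that by simp
    next
      assume a: "ps!m = y \<and> ps!(m+1) = x"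
      then have "ps!(m+1) = ps!i" using i by simp
      then have "m + 1 = i" using nei[of "m+1" i] that i by linarith
      moreover have "ps!m = ps!(i+1)" using a i by simp
      then have "m = i + 1" using nei[of m "i+1"] that i by linarith
      ultimately show False by simp
    qed
  qed
  have ninj: "inj_on (nth ps) {..<?n}" using dist by (simp add: inj_on_nth)
  define Bpos where "Bpos = {m. m < ?n \<and> ps!m \<in> B}"
  have "nth ps ` Bpos = B"
  proof
    show "nth ps ` Bpos \<subseteq> B" by (auto simp: Bpos_def)
    show "B \<subseteq> nth ps ` Bpos"
    proof
      fix w assume "w \<in> B"
      then have "w \<in> set ps" using sps by auto
      then obtain m where "m < ?n" "ps!m = w" by (auto simp: in_set_conv_nth)
      then show "w \<in> nth ps ` Bpos" using \<open>w \<in> B\<close> by (auto simp: Bpos_def)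
    qed
  qed
  moreover have "inj_on (nth ps) Bpos" using ninj by (rule inj_on_subset) (auto simp: Bpos_def)
  ultimately have cB: "card Bpos = card B" by (metis card_image)
  have finBpos: "finite Bpos" by (simp add: Bpos_def)
  define I where "I = {m. m < ?n \<and> {x, ps!m} \<in> F}"
  have "nth ps ` I = {w\<in>B. {x, w} \<in> F}"
  proof
    show "nth ps ` I \<subseteq> {w\<in>B. {x, w} \<in> F}" using bipE_edge[OF bip disj _ x] by (auto simp: I_def)
    show "{w\<in>B. {x, w} \<in> F} \<subseteq> nth ps ` I"
    proof
      fix w assume "w \<in> {w\<in>B. {x, w} \<in> F}"
      then have "w \<in> set ps" "{x, w} \<in> F" using sps by auto
      then obtain m where "m < ?n" "ps!m = w" by (auto simp: in_set_conv_nth)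
      then show "w \<in> nth ps ` I" using \<open>{x, w} \<in> F\<close> by (auto simp: I_def)
    qed
  qed
  moreover have "inj_on (nth ps) I" using ninj by (rule inj_on_subset) (auto simp: I_def)
  ultimately have cI: "card I = dg F B x" unfolding dg_def by (metis card_image)
  have IB: "I \<subseteq> Bpos" using bipE_edge[OF bip disj _ x] by (auto simp: I_def Bpos_def)
  define J' where "J' = {m. m < ?n \<and> 0 < m \<and> {y, ps!m} \<in> F}"
  have "nth ps ` J' = {w\<in>A. {y, w} \<in> F} - {ps!0}"
  proof
    show "nth ps ` J' \<subseteq> {w\<in>A. {y, w} \<in> F} - {ps!0}"
      using bipE_edgeB[OF bip disj _ y] nei[of _ 0] ne by (auto simp: J'_def)
    show "{w\<in>A. {y, w} \<in> F} - {ps!0} \<subseteq> nth ps ` J'"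
    proof
      fix w assume w: "w \<in> {w\<in>A. {y, w} \<in> F} - {ps!0}"
      then have "w \<in> set ps" "{y, w} \<in> F" using sps by auto
      then obtain m where m: "m < ?n" "ps!m = w" by (auto simp: in_set_conv_nth)
      have "m \<noteq> 0" using w m by (cases m) auto
      then have "m \<in> J'" using m \<open>{y, w} \<in> F\<close> by (auto simp: J'_def)
      then show "w \<in> nth ps ` J'" using m by auto
    qed
  qed
  moreover have "inj_on (nth ps) J'" using ninj by (rule inj_on_subset) (auto simp: J'_def)
  ultimately have "card J' = card ({w\<in>A. {y, w} \<in> F} - {ps!0})" by (metis card_image)
  moreover have "card ({w\<in>A. {y, w} \<in> F} - {ps!0}) \<ge> card {w\<in>A. {y, w} \<in> F} - 1"
    by (simp add: card_Diff_singleton_if)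
  ultimately have cJ': "card J' \<ge> dg F A y - 1" unfolding dg_def by simp
  define J where "J = (\<lambda>m. m - 1) ` J'"
  have "inj_on (\<lambda>m. m - 1) J'" by (auto simp: inj_on_def J'_def)
  then have cJ: "card J = card J'" unfolding J_def by (rule card_image)
  have JB: "J \<subseteq> Bpos"
  proof
    fix j assume "j \<in> J"
    then obtain m where m: "m \<in> J'" "j = m - 1" by (auto simp: J_def)
    then have m1: "m < ?n" "0 < m" "{y, ps!m} \<in> F" by (auto simp: J'_def)
    have "ps!m \<in> A" using bipE_edgeB[OF bip disj m1(3) y] .
    have "{ps!(m-1), ps!(m-1+1)} \<in> ?F'" using edges[rule_format, of "m-1"] m1 by simp
    then have "{ps!(m-1), ps!m} \<in> ?F'" using m1 by simp
    then have "ps!(m-1) \<in> B" using bipE_edge'[OF bip' disj _ \<open>ps!m \<in> A\<close>] by simp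
    then show "j \<in> Bpos" using m m1 by (auto simp: Bpos_def)
  qed
  have finI: "finite I" "finite J" using IB JB finBpos finite_subset by auto
  have "card (I \<union> J) \<le> card B" using IB JB cB finBpos by (metis card_mono le_sup_iff)
  moreover have "card I + card J = card (I \<union> J) + card (I \<inter> J)" using finI by (rule card_Un_Int)
  moreover have "card I + card J \<ge> card B + 1" using cI cJ cJ' deg cA by linarith
  ultimately have "card (I \<inter> J) > 0" by linarith
  then obtain j where j: "j \<in> I" "j \<in> J" by (metis card_gt_0_iff disjoint_iff inf_bot_right)
  from j(2) obtain m where "m \<in> J'" "j = m - 1" by (auto simp: J_def)
  then have jj: "j + 1 < ?n" "{y, ps!(j+1)} \<in> F" by (auto simp: J'_def)
  have jx: "{x, ps!j} \<in> F" using j(1) by (auto simp: I_def)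
  have "{x, x} \<notin> F" using bipE_edge[OF bip disj _ x, of x] x disj by auto
  then have "j \<noteq> i" using jx i by auto
  moreover have "j \<noteq> i + 1" using jx i nxy by auto
  moreover have "j + 1 \<noteq> i" using jj i nxy by (auto simp: insert_commute)
  ultimately consider "i + 1 < j" | "j + 1 < i" by linarith
  then show ?thesis
  proof cases
    case 1
    show ?thesis
      by (rule two_opt[OF dist 1 jj(1)]) (use other jx jj i in auto)
  next
    case 2
    show ?thesis
      by (rule two_opt[OF dist 2]) (use other jx jj i in \<open>auto simp: insert_commute\<close>)
  qed
qed

definition path_list :: "'a set set \<Rightarrow> 'a list \<Rightarrow> bool" where
  "path_list F ps \<longleftrightarrow> (\<forall>i. i + 1 < length ps \<longrightarrow> {ps ! i, ps ! (i + 1)} \<in> F)"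

lemma path_list_rev:
  assumes "path_list F ps" shows "path_list F (rev ps)"
  unfolding path_list_def
proof (intro allI impI)
  fix i assume i: "i + 1 < length (rev ps)"
  let ?j = "length ps - 2 - i"
  have j: "?j + 1 < length ps" using i by simp
  then have "{ps ! ?j, ps ! (?j + 1)} \<in> F" using assms unfolding path_list_def by blast
  moreover have "length ps - Suc i = ?j + 1" "length ps - Suc (i+1) = ?j" using i by auto
  then have "rev ps ! i = ps ! (?j + 1)" "rev ps ! (i+1) = ps ! ?j"
    using i by (simp_all add: rev_nth)
  ultimately show "{rev ps ! i, rev ps ! (i + 1)} \<in> F" by (simp add: insert_commute)
qed

lemma ham_path_alt: "ham_path V F u v \<longleftrightarrow> (\<exists>ps. ps \<noteq> [] \<and> distinct ps \<and> set ps = V \<and>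
     hd ps = u \<and> last ps = v \<and> path_list F ps)"
  unfolding ham_path_def path_list_def by blast

lemma ham_path_rev:
  assumes "ham_path V F u v" shows "ham_path V F v u"
  using assms path_list_rev unfolding ham_path_alt
  by (metis distinct_rev hd_rev last_rev rev_is_Nil_conv set_rev)

lemma core':
  assumes fin: "finite A" "finite B" and disj: "A \<inter> B = {}" and cA: "card A = card B + 1"
    and bip: "bipE A B F" and x: "x \<in> A" and y: "y \<in> B" and nxy: "{x, y} \<notin> F"
    and deg: "dg F B x + dg F A y \<ge> card A + 1"
    and dist: "distinct ps" and sps: "set ps = A \<union> B" and hdA: "hd ps \<in> A" and lastA: "last ps \<in> A"
    and i: "i + 1 < length ps" "ps ! i = x" "ps ! (i+1) = y"
    and edges: "path_list (insert {x, y} F) ps"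
  shows "\<exists>qs. qs \<noteq> [] \<and> distinct qs \<and> set qs = set ps \<and> hd qs = hd ps \<and> last qs = last ps \<and>
     path_list F qs"
  using core[OF assms(1-13) i] edges unfolding path_list_def by blast

lemma rotate:
  assumes fin: "finite A" "finite B" and disj: "A \<inter> B = {}" and cA: "card A = card B + 1"
    and bip: "bipE A B F" and x: "x \<in> A" and y: "y \<in> B" and nxy: "{x, y} \<notin> F"
    and deg: "dg F B x + dg F A y \<ge> card A + 1"
    and hp: "ham_path (A \<union> B) (insert {x, y} F) u v" and uv: "u \<in> A" "v \<in> A"
  shows "ham_path (A \<union> B) F u v"
proof -
  from hp obtain ps where ps: "ps \<noteq> []" "distinct ps" "set ps = A \<union> B" "hd ps = u" "last ps = v"
    and ed: "path_list (insert {x, y} F) ps"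
    unfolding ham_path_alt by blast
  show ?thesis
  proof (cases "\<exists>i. i + 1 < length ps \<and> {ps ! i, ps ! (i + 1)} = {x, y}")
    case False
    then have "path_list F ps" using ed unfolding path_list_def by blast
    then show ?thesis using ps unfolding ham_path_alt by blast
  next
    case True
    then obtain i where i: "i + 1 < length ps" "{ps ! i, ps ! (i + 1)} = {x, y}" by blast
    then have "(ps!i = x \<and> ps!(i+1) = y) \<or> (ps!i = y \<and> ps!(i+1) = x)" by (auto simp: doubleton_eq_iff)
    then show ?thesis
    proof
      assume o: "ps!i = x \<and> ps!(i+1) = y"
      have "\<exists>qs. qs \<noteq> [] \<and> distinct qs \<and> set qs = set ps \<and> hd qs = hd ps \<and> last qs = last ps \<and>
        path_list F qs"
        using core'[OF fin disj cA bip x y nxy deg ps(2,3) _ _ i(1) _ _ ed] o ps uv by auto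
      then show ?thesis unfolding ham_path_alt using ps by auto
    next
      assume o: "ps!i = y \<and> ps!(i+1) = x"
      let ?rs = "rev ps" and ?k = "length ps - 2 - i"
      have e: "length ps - Suc ?k = i + 1" "length ps - Suc (?k + 1) = i" using i by auto
      have k: "?k + 1 < length ?rs" "?rs ! ?k = x" "?rs ! (?k+1) = y"
        using o i e by (simp_all add: rev_nth)
      have "\<exists>qs. qs \<noteq> [] \<and> distinct qs \<and> set qs = set ?rs \<and> hd qs = hd ?rs \<and> last qs = last ?rs \<and>
        path_list F qs"
        using core'[OF fin disj cA bip x y nxy deg _ _ _ _ k path_list_rev[OF ed]] ps uv
        by (auto simp: hd_rev last_rev)
      then have "ham_path (A \<union> B) F v u" unfolding ham_path_alt using ps by (auto simp: hd_rev last_rev)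
      then show ?thesis by (rule ham_path_rev)
    qed
  qed
qed

lemma ham_ext:
  assumes "ham_path V F z v" "u \<notin> V" "y \<notin> V" "u \<noteq> y" "{u, y} \<in> F" "{y, z} \<in> F"
  shows "ham_path (insert u (insert y V)) F u v"
proof -
  from assms(1) obtain ps where ps: "ps \<noteq> []" "distinct ps" "set ps = V" "hd ps = z" "last ps = v"
    "path_list F ps" unfolding ham_path_alt by blast
  have "path_list F (u # y # ps)" unfolding path_list_def
  proof (intro allI impI)
    fix i assume i: "i + 1 < length (u # y # ps)"
    show "{(u # y # ps) ! i, (u # y # ps) ! (i + 1)} \<in> F"
    proof (cases i)
      case 0 then show ?thesis using assms by simp
    next
      case (Suc j)
      show ?thesis
      proof (cases j)
        case 0 then show ?thesis using Suc assms ps by (simp add: hd_conv_nth)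
      next
        case (Suc k)
        then have "k + 1 < length ps" using i \<open>i = Suc j\<close> by simp
        then show ?thesis using ps(6) \<open>i = Suc j\<close> Suc unfolding path_list_def by simp
      qed
    qed
  qed
  then show ?thesis unfolding ham_path_alt using ps assms
    by (intro exI[of _ "u # y # ps"]) auto
qed

lemma complete_hp:
  "\<forall>A B u v. finite A \<and> finite B \<and> A \<inter> B = {} \<and> card B = n \<and> card A = n + 1 \<and>
    (\<forall>a\<in>A. \<forall>b\<in>B. {a, b} \<in> F) \<and> u \<in> A \<and> v \<in> A \<and> (u \<noteq> v \<or> n = 0) \<longrightarrow> ham_path (A \<union> B) F u v"
proof (induction n)
  case 0
  show ?case
  proof (intro allI impI)
    fix A B :: "'a set" and u v
    assume a: "finite A \<and> finite B \<and> A \<inter> B = {} \<and> card B = 0 \<and> card A = 0 + 1 \<and>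
      (\<forall>a\<in>A. \<forall>b\<in>B. {a, b} \<in> F) \<and> u \<in> A \<and> v \<in> A \<and> (u \<noteq> v \<or> 0 = (0::nat))"
    then have "B = {}" by auto
    moreover obtain w where "A = {w}" using a by (auto simp: card_Suc_eq)
    ultimately have "A \<union> B = {u}" "u = v" using a by auto
    then show "ham_path (A \<union> B) F u v" unfolding ham_path_def by (intro exI[of _ "[u]"]) auto
  qed
next
  case (Suc n)
  show ?case
  proof (intro allI impI)
    fix A B :: "'a set" and u v
    assume a: "finite A \<and> finite B \<and> A \<inter> B = {} \<and> card B = Suc n \<and> card A = Suc n + 1 \<and>
      (\<forall>a\<in>A. \<forall>b\<in>B. {a, b} \<in> F) \<and> u \<in> A \<and> v \<in> A \<and> (u \<noteq> v \<or> Suc n = 0)"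
    then have uv: "u \<noteq> v" by simp
    obtain y where y: "y \<in> B" using a by (metis card.empty ex_in_conv nat.distinct(1))
    obtain z where z: "z \<in> A - {u}" "z \<noteq> v \<or> n = 0"
    proof (cases "n = 0")
      case True then show ?thesis using that a uv by blast
    next
      case False
      have "card (A - {u, v}) = n" using a uv by (simp add: card_Diff_subset)
      then obtain z where "z \<in> A - {u, v}" using False by (metis card.empty ex_in_conv)
      then show ?thesis using that by blast
    qed
    have "ham_path ((A - {u}) \<union> (B - {y})) F z v"
      using Suc.IH[rule_format, of "A - {u}" "B - {y}" z v] a y z uv by auto
    then have "ham_path (insert u (insert y ((A - {u}) \<union> (B - {y})))) F u v"
      by (rule ham_ext) (use a y z in \<open>auto simp: insert_commute\<close>)
    moreover have "insert u (insert y ((A - {u}) \<union> (B - {y}))) = A \<union> B" using a y by auto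
    ultimately show "ham_path (A \<union> B) F u v" by simp
  qed
qed

definition MP :: "'a set set \<Rightarrow> 'a set \<Rightarrow> 'a set \<Rightarrow> ('a \<times> 'a) set" where
  "MP F A B = {(a, b). a \<in> A \<and> b \<in> B \<and> {a, b} \<notin> F}"

lemma closure:
  assumes fin: "finite A" "finite B" and disj: "A \<inter> B = {}" and cA: "card A = card B + 1"
    and step: "\<And>F. bipE A B F \<Longrightarrow> P F \<Longrightarrow> MP F A B \<noteq> {} \<Longrightarrow>
       \<exists>x\<in>A. \<exists>y\<in>B. {x, y} \<notin> F \<and> dg F B x + dg F A y \<ge> card A + 1 \<and> P (insert {x, y} F)"
  shows "bipE A B F \<Longrightarrow> P F \<Longrightarrow> ham_biconnected A B F"
proof (induction "card (MP F A B)" arbitrary: F rule: less_induct)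
  case less
  have finM: "finite (MP F A B)" for F
  proof -
    have "MP F A B \<subseteq> A \<times> B" by (auto simp: MP_def)
    then show ?thesis using fin by (simp add: finite_subset)
  qed
  show ?case
  proof (cases "MP F A B = {}")
    case True
    then have all: "\<forall>a\<in>A. \<forall>b\<in>B. {a, b} \<in> F" by (auto simp: MP_def)
    show ?thesis unfolding ham_biconnected_def
      using complete_hp[of "card B" F] fin disj cA all by auto
  next
    case False
    from step[OF less.prems this] obtain x y where xy: "x \<in> A" "y \<in> B" "{x, y} \<notin> F"
      "dg F B x + dg F A y \<ge> card A + 1" "P (insert {x, y} F)" by blast
    let ?F = "insert {x, y} F"
    have bip: "bipE A B ?F" using less.prems(1) xy unfolding bipE_def by auto
    have "MP ?F A B = MP F A B - {(x, y)}" using xy disj by (auto simp: MP_def doubleton_eq_iff)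
    moreover have "(x, y) \<in> MP F A B" using xy by (auto simp: MP_def)
    ultimately have "card (MP ?F A B) < card (MP F A B)"
      using finM[of F] by (metis card_Diff1_less)
    from less.hyps[OF this bip xy(5)] have hb: "ham_biconnected A B ?F" .
    show ?thesis unfolding ham_biconnected_def
    proof (intro ballI impI)
      fix u v assume "u \<in> A" "v \<in> A" "u \<noteq> v"
      then have "ham_path (A \<union> B) ?F u v" using hb unfolding ham_biconnected_def by blast
      then show "ham_path (A \<union> B) F u v"
        by (rule rotate[OF fin disj cA less.prems(1) xy(1-4)]) (use \<open>u \<in> A\<close> \<open>v \<in> A\<close> in auto)
    qed
  qed
qed

lemma dg_split:
  assumes "finite S"
  shows "dg F S v + card {w\<in>S. {v, w} \<notin> F} = card S"
proof -
  have "{w\<in>S. {v, w} \<in> F} \<union> {w\<in>S. {v, w} \<notin> F} = S" by auto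
  moreover have "{w\<in>S. {v, w} \<in> F} \<inter> {w\<in>S. {v, w} \<notin> F} = {}" by auto
  ultimately show ?thesis unfolding dg_def using assms
    by (metis (no_types, lifting) card_Un_disjoint finite_Un)
qed

lemma finMP: "finite A \<Longrightarrow> finite B \<Longrightarrow> finite (MP F A B)"
proof -
  assume "finite A" "finite B"
  moreover have "MP F A B \<subseteq> A \<times> B" by (auto simp: MP_def)
  ultimately show ?thesis by (simp add: finite_subset)
qed

lemma pair_count:
  assumes fin: "finite A" "finite B" and xy: "(x, y) \<in> MP F A B"
  shows "card {w\<in>B. {x, w} \<notin> F} + card {w\<in>A. {y, w} \<notin> F} \<le> card (MP F A B) + 1"
proof -
  let ?S1 = "(\<lambda>w. (x, w)) ` {w\<in>B. {x, w} \<notin> F}" and ?S2 = "(\<lambda>w. (w, y)) ` {w\<in>A. {y, w} \<notin> F}"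
  have c1: "card ?S1 = card {w\<in>B. {x, w} \<notin> F}" by (rule card_image) (auto simp: inj_on_def)
  have c2: "card ?S2 = card {w\<in>A. {y, w} \<notin> F}" by (rule card_image) (auto simp: inj_on_def)
  have x: "x \<in> A" using xy by (auto simp: MP_def)
  have y: "y \<in> B" using xy by (auto simp: MP_def)
  have sub: "?S1 \<union> ?S2 \<subseteq> MP F A B" using x y by (auto simp: MP_def insert_commute)
  have int: "?S1 \<inter> ?S2 \<subseteq> {(x, y)}" by auto
  have f: "finite ?S1" "finite ?S2" using fin by auto
  have "card ?S1 + card ?S2 = card (?S1 \<union> ?S2) + card (?S1 \<inter> ?S2)" using f by (rule card_Un_Int)
  also have "card (?S1 \<union> ?S2) \<le> card (MP F A B)" using sub finMP[OF fin] by (rule card_mono[rotated])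
  also have "card (?S1 \<inter> ?S2) \<le> 1" using card_mono[OF _ int] by simp
  finally show ?thesis using c1 c2 by simp
qed

lemma step_i:
  assumes fin: "finite A" "finite B" and cA: "card A = card B + 1"
    and P: "card (MP F A B) + 3 \<le> card A" and ne: "MP F A B \<noteq> {}"
  shows "\<exists>x\<in>A. \<exists>y\<in>B. {x, y} \<notin> F \<and> dg F B x + dg F A y \<ge> card A + 1 \<and>
     card (MP (insert {x, y} F) A B) + 3 \<le> card A"
proof -
  from ne obtain x y where xy: "(x, y) \<in> MP F A B" by auto
  then have x: "x \<in> A" and y: "y \<in> B" and nxy: "{x, y} \<notin> F" by (auto simp: MP_def)
  have "dg F B x + dg F A y \<ge> card A + 1"
    using pair_count[OF fin xy] dg_split[OF fin(2), of F x] dg_split[OF fin(1), of F y] P cA by linarith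
  moreover have "card (MP (insert {x, y} F) A B) \<le> card (MP F A B)"
    by (rule card_mono[OF finMP[OF fin]]) (auto simp: MP_def)
  ultimately have "{x, y} \<notin> F \<and> dg F B x + dg F A y \<ge> card A + 1 \<and>
     card (MP (insert {x, y} F) A B) + 3 \<le> card A" using nxy P by linarith
  then show ?thesis using x y by blast
qed

lemma arith1:
  fixes a d t :: nat
  assumes "d \<le> t" "t + d + 1 \<le> a"
  shows "(a - d) * (d - 1) \<le> (a - 1 - t) * t"
proof -
  obtain k where k: "t = d + k" using assms(1) le_Suc_ex by blast
  obtain l where l: "a = t + d + 1 + l" using assms(2) le_Suc_ex by blast
  show ?thesis
  proof (cases d)
    case 0 then show ?thesis by simp
  next
    case (Suc e)
    have "(a - d) * (d - 1) = (k + e + 2 + l) * e" using k l Suc by simp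
    moreover have "(a - 1 - t) * t = (e + 1 + l) * (e + 1 + k)" using k l Suc by simp
    moreover have "(k + e + 2 + l) * e \<le> (e + 1 + l) * (e + 1 + k)" by (simp add: algebra_simps)
    ultimately show ?thesis by simp
  qed
qed

lemma dg_mono: "finite S \<Longrightarrow> dg F S v \<le> dg (insert e F) S v"
  unfolding dg_def by (rule card_mono) auto

lemma step_ii:
  assumes fin: "finite A" "finite B" and cA: "card A = card B + 1"
    and P: "(\<forall>v\<in>A. dg F B v \<ge> d) \<and> (\<forall>w\<in>B. dg F A w \<ge> d) \<and> card (MP F A B) < (card A - d) * (d - 1)"
    and ne: "MP F A B \<noteq> {}"
  shows "\<exists>x\<in>A. \<exists>y\<in>B. {x, y} \<notin> F \<and> dg F B x + dg F A y \<ge> card A + 1 \<and>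
     ((\<forall>v\<in>A. dg (insert {x, y} F) B v \<ge> d) \<and> (\<forall>w\<in>B. dg (insert {x, y} F) A w \<ge> d) \<and>
      card (MP (insert {x, y} F) A B) < (card A - d) * (d - 1))"
proof -
  let ?a = "card A" and ?b = "card B"
  define f where "f p = dg F B (fst p) + dg F A (snd p)" for p
  have finM: "finite (MP F A B)" using finMP[OF fin] .
  define m where "m = Max (f ` MP F A B)"
  have "m \<in> f ` MP F A B" unfolding m_def using finM ne by auto
  then obtain x y where xy: "(x, y) \<in> MP F A B" "f (x, y) = m" by auto
  have maxi: "f q \<le> f (x, y)" if "q \<in> MP F A B" for q
    using xy(2) that finM unfolding m_def by simp
  have x: "x \<in> A" and y: "y \<in> B" and nxy: "{x, y} \<notin> F" using xy by (auto simp: MP_def)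
  show ?thesis
  proof (cases "f (x, y) \<ge> ?a + 1")
    case True
    have "card (MP (insert {x, y} F) A B) \<le> card (MP F A B)"
      by (rule card_mono[OF finM]) (auto simp: MP_def)
    moreover have "\<forall>v\<in>A. dg (insert {x, y} F) B v \<ge> d"
    proof
      fix v assume "v \<in> A"
      then show "dg (insert {x, y} F) B v \<ge> d" using P dg_mono[OF fin(2), of F v "{x, y}"] by auto
    qed
    moreover have "\<forall>w\<in>B. dg (insert {x, y} F) A w \<ge> d"
    proof
      fix v assume "v \<in> B"
      then show "dg (insert {x, y} F) A v \<ge> d" using P dg_mono[OF fin(1), of F v "{x, y}"] by auto
    qed
    moreover have "dg F B x + dg F A y \<ge> ?a + 1" using True unfolding f_def by simp
    ultimately have "{x, y} \<notin> F \<and> dg F B x + dg F A y \<ge> card A + 1 \<and>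
     ((\<forall>v\<in>A. dg (insert {x, y} F) B v \<ge> d) \<and> (\<forall>w\<in>B. dg (insert {x, y} F) A w \<ge> d) \<and>
      card (MP (insert {x, y} F) A B) < (card A - d) * (d - 1))" using nxy P by linarith
    then show ?thesis using x y by blast
  next
    case False
    then have le: "f (x, y) \<le> ?a" by simp
    let ?t = "dg F B x" and ?s = "dg F A y"
    have td: "?t \<ge> d" "?s \<ge> d" using P x y by auto
    have False
    proof (cases "?t + d + 1 \<le> ?a")
      case True
      define Bx where "Bx = {w\<in>B. {x, w} \<notin> F}"
      define Aw where "Aw w = {v\<in>A. {w, v} \<notin> F}" for w
      have cBx: "card Bx = ?b - ?t" using dg_split[OF fin(2), of F x] unfolding Bx_def by simp
      have cAw: "card (Aw w) \<ge> ?t" if "w \<in> Bx" for w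
      proof -
        have "(x, w) \<in> MP F A B" using that x by (auto simp: Bx_def MP_def)
        from maxi[OF this] have "?t + dg F A w \<le> ?a" using le unfolding f_def by simp
        then show ?thesis using dg_split[OF fin(1), of F w] unfolding Aw_def by simp
      qed
      have "card Bx * ?t \<le> (\<Sum>w\<in>Bx. card (Aw w))"
        using cAw sum_mono[of Bx "\<lambda>_. ?t" "\<lambda>w. card (Aw w)"] by simp
      also have "\<dots> = card (Sigma Bx Aw)"
        using fin by (intro card_SigmaI[symmetric]) (auto simp: Bx_def Aw_def)
      also have "\<dots> = card (prod.swap ` Sigma Bx Aw)" by (simp add: card_image)
      also have "\<dots> \<le> card (MP F A B)"
        by (rule card_mono[OF finM]) (auto simp: Bx_def Aw_def MP_def insert_commute)
      finally have "(?b - ?t) * ?t \<le> card (MP F A B)" using cBx by simp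
      moreover have "(?a - d) * (d - 1) \<le> (?a - 1 - ?t) * ?t" using arith1[OF td(1) True] .
      ultimately show False using P cA by simp
    next
      case False
      then have sd: "?s = d" using le td unfolding f_def by simp
      define Ay where "Ay = {v\<in>A. {y, v} \<notin> F}"
      define Bv where "Bv v = {w\<in>B. {v, w} \<notin> F}" for v
      have cAy: "card Ay = ?a - d" using dg_split[OF fin(1), of F y] sd unfolding Ay_def by simp
      have cBv: "card (Bv v) \<ge> d - 1" if "v \<in> Ay" for v
      proof -
        have "(v, y) \<in> MP F A B" using that y by (auto simp: Ay_def MP_def insert_commute)
        from maxi[OF this] have "dg F B v + d \<le> ?a" using le sd unfolding f_def by simp
        then show ?thesis using dg_split[OF fin(2), of F v] cA unfolding Bv_def by simp
      qed
      have "card Ay * (d - 1) \<le> (\<Sum>v\<in>Ay. card (Bv v))"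
        using cBv sum_mono[of Ay "\<lambda>_. d - 1" "\<lambda>v. card (Bv v)"] by simp
      also have "\<dots> = card (Sigma Ay Bv)"
        using fin by (intro card_SigmaI[symmetric]) (auto simp: Ay_def Bv_def)
      also have "\<dots> \<le> card (MP F A B)"
        by (rule card_mono[OF finM]) (auto simp: Ay_def Bv_def MP_def)
      finally show False using cAy P by simp
    qed
    then show ?thesis ..
  qed
qed

lemma sum_adj_dg: "finite Y \<Longrightarrow> (\<Sum>w\<in>Y. adj E u w) = real (dg E Y u)"
  unfolding adj_def dg_def by (simp add: sum.If_cases Int_def)

lemma e_eq:
  assumes "finite X" "finite Y"
  shows "(\<Sum>u\<in>X. real (dg E Y u)) + real (card (MP E X Y)) = real (card X) * real (card Y)"
proof -
  have "MP E X Y = Sigma X (\<lambda>u. {w\<in>Y. {u, w} \<notin> E})" by (auto simp: MP_def)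
  then have "card (MP E X Y) = (\<Sum>u\<in>X. card {w\<in>Y. {u, w} \<notin> E})" using assms by simp
  then have "(\<Sum>u\<in>X. dg E Y u) + card (MP E X Y) = (\<Sum>u\<in>X. card Y)"
    using dg_split[OF assms(2), of E] by (simp add: sum.distrib[symmetric])
  then have "real ((\<Sum>u\<in>X. dg E Y u) + card (MP E X Y)) = real (card X * card Y)" by simp
  then show ?thesis by (simp add: of_nat_sum)
qed

lemma bip_bipE: "bipartite_graph X Y E \<Longrightarrow> bipE X Y E"
  unfolding bipartite_graph_def bipE_def by blast

lemma degree_dg:
  assumes G: "bipartite_graph X Y E"
  shows "u \<in> X \<Longrightarrow> degree E u = dg E Y u" and "u \<in> Y \<Longrightarrow> degree E u = dg E X u"
proof -
  have d: "X \<inter> Y = {}" using G by (simp add: bipartite_graph_def)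
  have bip: "bipE X Y E" using G by (rule bip_bipE)
  have bip2: "bipE Y X E" using bip unfolding bipE_def by (metis insert_commute)
  show "u \<in> X \<Longrightarrow> degree E u = dg E Y u"
  proof -
    assume u: "u \<in> X"
    have "{w. {w, u} \<in> E} = {w\<in>Y. {u, w} \<in> E}"
      using bipE_edge'[OF bip d _ u] by (auto simp: insert_commute)
    then show ?thesis by (simp add: degree_def dg_def)
  qed
  show "u \<in> Y \<Longrightarrow> degree E u = dg E X u"
  proof -
    assume u: "u \<in> Y"
    have d2: "Y \<inter> X = {}" using d by auto
    have "{w. {w, u} \<in> E} = {w\<in>X. {u, w} \<in> E}"
      using bipE_edge'[OF bip2 d2 _ u] by (auto simp: insert_commute)
    then show ?thesis by (simp add: degree_def dg_def)
  qed
qed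

lemma rho_facts:
  assumes G: "bipartite_graph X Y E" and cYX: "card Y < card X"
    and degX: "\<forall>u\<in>X. dg E Y u \<ge> 1" and degY: "\<forall>w\<in>Y. dg E X w \<ge> 1"
  shows "(spectral_radius (X \<union> Y) E)^2 \<le> (\<Sum>u\<in>X. real (dg E Y u)) \<and>
     ((spectral_radius (X \<union> Y) E)^2 = (\<Sum>u\<in>X. real (dg E Y u)) \<longrightarrow> MP E X Y = {})"
proof -
  have fin: "finite X" "finite Y" using G by (auto simp: bipartite_graph_def)
  let ?S = "{mu. adj_eigenvalue (X \<union> Y) E mu}"
  have "finite ?S" using fin by (intro eig_finite) auto
  moreover have "0 \<in> ?S" using zero_eig[OF G cYX] by simp
  ultimately have "spectral_radius (X \<union> Y) E \<in> ?S" unfolding spectral_radius_def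
    by (metis Max_in empty_iff)
  then have ev: "adj_eigenvalue (X \<union> Y) E (spectral_radius (X \<union> Y) E)" by simp
  have e1: "(\<Sum>u\<in>X. \<Sum>w\<in>Y. adj E u w) = (\<Sum>u\<in>X. real (dg E Y u))"
    using sum_adj_dg[OF fin(2)] by simp
  have d1: "\<forall>u\<in>X. (\<Sum>w\<in>Y. adj E u w) \<ge> 1" using degX sum_adj_dg[OF fin(2)] by simp
  have d2: "\<forall>w\<in>Y. (\<Sum>u\<in>X. adj E w u) \<ge> 1" using degY sum_adj_dg[OF fin(1)] by simp
  have "\<forall>u\<in>X. \<forall>w\<in>Y. {u, w} \<in> E" if "(spectral_radius (X \<union> Y) E)^2 = (\<Sum>u\<in>X. real (dg E Y u))"
    using spec[OF G ev] e1 d1 d2 that by simp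
  then show ?thesis using spec[OF G ev] e1 by (auto simp: MP_def)
qed

lemma remove_W:
  assumes G: "bipartite_graph X Y E" and W: "W \<subseteq> X \<union> Y" "balanced_set X Y W" "card W = 2 * p"
  defines "F \<equiv> induced_edges E (X \<union> Y - W)"
  shows "finite (X - W)" "finite (Y - W)" "(X - W) \<inter> (Y - W) = {}"
    "card (X - W) = card X - p" "card (Y - W) = card Y - p" "bipE (X - W) (Y - W) F"
    "card (MP F (X - W) (Y - W)) \<le> card (MP E X Y)"
    "\<forall>v\<in>X - W. dg F (Y - W) v + p \<ge> dg E Y v"
    "\<forall>w\<in>Y - W. dg F (X - W) w + p \<ge> dg E X w"
proof -
  have fin: "finite X" "finite Y" and d: "X \<inter> Y = {}" and bip: "\<forall>e\<in>E. \<exists>x\<in>X. \<exists>y\<in>Y. e = {x, y}"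
    using G by (auto simp: bipartite_graph_def)
  show "finite (X - W)" "finite (Y - W)" "(X - W) \<inter> (Y - W) = {}" using fin d by auto
  have "W = (W \<inter> X) \<union> (W \<inter> Y)" using W(1) by auto
  moreover have "finite (W \<inter> X)" "finite (W \<inter> Y)" using fin by auto
  moreover have "(W \<inter> X) \<inter> (W \<inter> Y) = {}" using d by auto
  ultimately have "card W = card (W \<inter> X) + card (W \<inter> Y)"
    by (metis card_Un_disjoint)
  then have pX: "card (W \<inter> X) = p" and pY: "card (W \<inter> Y) = p" using W(2,3) by (auto simp: balanced_set_def)
  show "card (X - W) = card X - p" using fin pX by (simp add: card_Diff_subset_Int Int_commute)
  show "card (Y - W) = card Y - p" using fin pY by (simp add: card_Diff_subset_Int Int_commute)
  show "bipE (X - W) (Y - W) F"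
    unfolding bipE_def
  proof
    fix e assume "e \<in> F"
    then have e: "e \<in> E" "e \<subseteq> X \<union> Y - W" by (auto simp: F_def induced_edges_def)
    then obtain x y where "x \<in> X" "y \<in> Y" "e = {x, y}" using bip by blast
    then show "\<exists>x\<in>X - W. \<exists>y\<in>Y - W. e = {x, y}" using e(2) by blast
  qed
  have inF: "{a, b} \<in> F" if "{a, b} \<in> E" "a \<in> X \<union> Y - W" "b \<in> X \<union> Y - W" for a b
    using that by (auto simp: F_def induced_edges_def)
  show "card (MP F (X - W) (Y - W)) \<le> card (MP E X Y)"
  proof (rule card_mono[OF finMP[OF fin]], rule subsetI)
    fix q assume "q \<in> MP F (X - W) (Y - W)"
    then obtain a b where q: "q = (a, b)" "a \<in> X - W" "b \<in> Y - W" "{a, b} \<notin> F" by (auto simp: MP_def)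
    then have "{a, b} \<notin> E" using inF[of a b] by blast
    then show "q \<in> MP E X Y" using q by (auto simp: MP_def)
  qed
  show "\<forall>v\<in>X - W. dg F (Y - W) v + p \<ge> dg E Y v"
  proof
    fix v assume v: "v \<in> X - W"
    have "{w\<in>Y. {v, w} \<in> E} - (W \<inter> Y) \<subseteq> {w\<in>Y - W. {v, w} \<in> F}" using v by (auto intro: inF)
    then have "card ({w\<in>Y. {v, w} \<in> E} - (W \<inter> Y)) \<le> dg F (Y - W) v"
      unfolding dg_def by (rule card_mono[rotated]) (use fin in auto)
    moreover have "card {w\<in>Y. {v, w} \<in> E} - card (W \<inter> Y) \<le> card ({w\<in>Y. {v, w} \<in> E} - (W \<inter> Y))"
      by (rule diff_card_le_card_Diff) (use fin in auto)
    ultimately show "dg F (Y - W) v + p \<ge> dg E Y v" using pY unfolding dg_def by linarith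
  qed
  show "\<forall>v\<in>Y - W. dg F (X - W) v + p \<ge> dg E X v"
  proof
    fix v assume v: "v \<in> Y - W"
    have "{w\<in>X. {v, w} \<in> E} - (W \<inter> X) \<subseteq> {w\<in>X - W. {v, w} \<in> F}" using v by (auto intro: inF)
    then have "card ({w\<in>X. {v, w} \<in> E} - (W \<inter> X)) \<le> dg F (X - W) v"
      unfolding dg_def by (rule card_mono[rotated]) (use fin in auto)
    moreover have "card {w\<in>X. {v, w} \<in> E} - card (W \<inter> X) \<le> card ({w\<in>X. {v, w} \<in> E} - (W \<inter> X))"
      by (rule diff_card_le_card_Diff) (use fin in auto)
    ultimately show "dg F (X - W) v + p \<ge> dg E X v" using pX unfolding dg_def by linarith
  qed
qed

theorem corollary5p3:
  fixes X Y :: "'a set" and E :: "'a set set" and p k n :: nat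
  assumes G: "bipartite_graph X Y E"
    and nb: "nearly_balanced X Y"
    and ord: "card (X \<union> Y) = 2 * n - 1"
    and deg: "min_degree_ge (X \<union> Y) E k"
  shows
    "(k = p + 1 \<and> n \<ge> 2 * k + 3 \<and>
        spectral_radius (X \<union> Y) E \<ge> sqrt ((real n - 1)^2 + real k)
       \<longrightarrow> ham_biconnected_2p p X Y E)
     \<and>
     (k \<ge> p + 2 \<and> real n \<ge> real ((k + 2) * (k - p + 1)) / 2 \<and>
        spectral_radius (X \<union> Y) E \<ge>
          sqrt (real n * (real n - real k + real p) + real k * (real k - real p - 1))
       \<longrightarrow> ham_biconnected_2p p X Y E)"
proof -
  have fin: "finite X" "finite Y" and d: "X \<inter> Y = {}" using G by (auto simp: bipartite_graph_def)
  have cX: "card X = card Y + 1" using nb by (simp add: nearly_balanced_def)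
  have "card (X \<union> Y) = card X + card Y" using fin d by (simp add: card_Un_disjoint)
  then have cXn: "card X = n" and cYn: "card Y = n - 1" and n1: "n \<ge> 1" using ord cX by auto
  let ?rho = "spectral_radius (X \<union> Y) E"
  let ?e = "\<Sum>u\<in>X. real (dg E Y u)"
  let ?m = "card (MP E X Y)"
  have degX: "\<forall>u\<in>X. dg E Y u \<ge> k"
  proof
    fix u assume u: "u \<in> X"
    have "k \<le> degree E u" using deg u unfolding min_degree_ge_def by blast
    then show "dg E Y u \<ge> k" using degree_dg(1)[OF G u] by simp
  qed
  have degY: "\<forall>w\<in>Y. dg E X w \<ge> k"
  proof
    fix u assume u: "u \<in> Y"
    have "k \<le> degree E u" using deg u unfolding min_degree_ge_def by blast
    then show "dg E X u \<ge> k" using degree_dg(2)[OF G u] by simp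
  qed
  have eeq: "?e + real ?m = real n * (real n - 1)" using e_eq[OF fin, of E] cXn cYn n1 by (simp add: of_nat_diff)
  have rho: "k \<ge> 1 \<Longrightarrow> ?rho^2 \<le> ?e \<and> (?rho^2 = ?e \<longrightarrow> MP E X Y = {})"
  proof -
    assume k1: "k \<ge> 1"
    have "\<forall>u\<in>X. dg E Y u \<ge> 1" using degX k1 le_trans by blast
    moreover have "\<forall>w\<in>Y. dg E X w \<ge> 1" using degY k1 le_trans by blast
    moreover have "card Y < card X" using cX by simp
    ultimately show ?thesis using rho_facts[OF G] by blast
  qed
  have sq: "?rho^2 \<ge> T" if "?rho \<ge> sqrt T" "T \<ge> 0" for T
  proof -
    have "sqrt T ^ 2 \<le> ?rho^2" using that by (intro power_mono) auto
    then show ?thesis using that by simp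
  qed
  have key: "?m = 0 \<or> real ?m < real n * (real n - 1) - T"
    if "?rho \<ge> sqrt T" "T \<ge> 0" "k \<ge> 1" for T
  proof (cases "?rho^2 = ?e")
    case True then show ?thesis using rho[OF that(3)] by simp
  next
    case False
    then have "?rho^2 < ?e" using rho[OF that(3)] by simp
    then show ?thesis using sq[OF that(1,2)] eeq by linarith
  qed
  show ?thesis
  proof (intro conjI impI)
    assume h: "k = p + 1 \<and> n \<ge> 2 * k + 3 \<and> ?rho \<ge> sqrt ((real n - 1)^2 + real k)"
    have m: "?m = 0 \<or> real ?m < real n * (real n - 1) - ((real n - 1)^2 + real k)"
      using key[of "(real n - 1)^2 + real k"] h by auto
    have hk: "k = p + 1" "n \<ge> 2 * k + 3" using h by auto
    have m3: "?m + 3 \<le> n - p"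
    proof (cases "?m = 0")
      case True then show ?thesis using hk by simp
    next
      case False
      then have "real ?m < real n - 1 - real k" using m by (simp add: power2_eq_square algebra_simps)
      then have "?m + 1 + k < n" by linarith
      then show ?thesis using hk by simp
    qed
    show "ham_biconnected_2p p X Y E" unfolding ham_biconnected_2p_def
    proof (intro allI impI)
      fix W assume W: "W \<subseteq> X \<union> Y" "balanced_set X Y W" "card W = 2 * p"
      note R = remove_W[OF G W]
      let ?F = "induced_edges E (X \<union> Y - W)"
      have cA: "card (X - W) = card (Y - W) + 1" using R(4,5) cXn cYn hk by simp
      have P: "card (MP ?F (X - W) (Y - W)) + 3 \<le> card (X - W)" using R(4,7) cXn m3 by simp
      show "ham_biconnected (X - W) (Y - W) ?F"
        using closure[OF R(1-3) cA, of "\<lambda>F. card (MP F (X - W) (Y - W)) + 3 \<le> card (X - W)"]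
          step_i[OF R(1,2) cA] R(6) P by blast
    qed
  next
    assume h: "k \<ge> p + 2 \<and> real n \<ge> real ((k + 2) * (k - p + 1)) / 2 \<and>
        ?rho \<ge> sqrt (real n * (real n - real k + real p) + real k * (real k - real p - 1))"
    have hk: "k \<ge> p + 2" "real n \<ge> real ((k + 2) * (k - p + 1)) / 2" using h by auto
    have "(k + 2) * 3 \<le> (k + 2) * (k - p + 1)" using hk(1) by (intro mult_le_mono2) linarith
    then have A: "real ((k + 2) * 3) \<le> real ((k + 2) * (k - p + 1))" by (simp only: of_nat_le_iff)
    have B: "real ((k + 2) * 3) = 3 * real k + 6" by simp
    have "real ((k + 2) * 3) / 2 \<le> real ((k + 2) * (k - p + 1)) / 2" using A by (rule divide_right_mono) simp
    then have "real ((k + 2) * 3) / 2 \<le> real n" using hk(2) by (rule order_trans)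
    then have "real n \<ge> (3 * real k + 6) / 2" unfolding B .
    moreover have "real k \<ge> 0" by simp
    ultimately have nk: "real n > real k" by (simp add: field_simps)
    let ?T = "real n * (real n - real k + real p) + real k * (real k - real p - 1)"
    have T0: "?T \<ge> 0" using nk h by (intro add_nonneg_nonneg mult_nonneg_nonneg) auto
    have m: "?m = 0 \<or> real ?m < real n * (real n - 1) - ?T"
      using key[OF _ T0] h by simp
    have bnd: "real n * (real n - 1) - ?T = (real n - real k) * (real k - real p - 1)"
      by (simp add: algebra_simps)
    have m2: "?m < (n - k) * (k - p - 1)"
    proof (cases "?m = 0")
      case True
      have "0 < (n - k) * (k - p - 1)" using nk h by simp
      then show ?thesis using True by simp
    next
      case False
      then have "real ?m < (real n - real k) * (real k - real p - 1)" using m bnd by simp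
      also have "\<dots> = real ((n - k) * (k - p - 1))" using nk h by (simp add: of_nat_diff)
      finally show ?thesis by linarith
    qed
    show "ham_biconnected_2p p X Y E" unfolding ham_biconnected_2p_def
    proof (intro allI impI)
      fix W assume W: "W \<subseteq> X \<union> Y" "balanced_set X Y W" "card W = 2 * p"
      note R = remove_W[OF G W]
      let ?F = "induced_edges E (X \<union> Y - W)"
      let ?d = "k - p"
      have np: "n > p" using nk h by simp
      have cA: "card (X - W) = card (Y - W) + 1" using R(4,5) cXn cYn np by simp
      have "(card (X - W) - ?d) * (?d - 1) = (n - k) * (k - p - 1)" using R(4) cXn h by simp
      then have P: "(\<forall>v\<in>X - W. dg ?F (Y - W) v \<ge> ?d) \<and> (\<forall>w\<in>Y - W. dg ?F (X - W) w \<ge> ?d) \<and>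
          card (MP ?F (X - W) (Y - W)) < (card (X - W) - ?d) * (?d - 1)"
        using R(7,8,9) degX degY m2 by force
      show "ham_biconnected (X - W) (Y - W) ?F"
        using closure[OF R(1-3) cA, of "\<lambda>F. (\<forall>v\<in>X - W. dg F (Y - W) v \<ge> ?d) \<and> (\<forall>w\<in>Y - W. dg F (X - W) w \<ge> ?d) \<and>
          card (MP F (X - W) (Y - W)) < (card (X - W) - ?d) * (?d - 1)"]
          step_ii[OF R(1,2) cA] R(6) P by blast
    qed
  qed
qed

end
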